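(* Let $G=(F\cup C,E)$ be a finite bipartite graph with $F\neq\emptyset$, no isolated vertices, and $n:=|F|+|C|$. If $|E|\ge n\sqrt n$, then the expected number of clients removed in one iteration of FacilitySelect on $G$ is at least $\sqrt{|C|}$.
   Context: Let $G=(F\cup C,E)$ be a finite bipartite graph with parts $F$ (facilities) and $C$ (clients). The facility graph $G_F=(F,E_F)$ has an edge $\{i,i'\}$ ($i\ne i'$) iff $i$ and $i'$ have a common neighbor in $G$. Write $\deg(\cdot)$, $N(\cdot)$ for degree/neighborhood in $G$, $\deg_F(\cdot)$, $N_F(\cdot)$ for those in $G_F$. One iteration of FacilitySelect: every $i\in F$ independently draws $r_i$ uniformly from $[0,1]$; let $I=\{i\in F: r_i>\max_{i'\in N_F(i)} r_{i'}\}$ (the maximum over the empty set being $-\infty$); then all vertices of $I\cup N(I)$ are deleted from $G$ together with all their incident edges. "Clients removed" are the clients in $N(I)$. FacilitySelect repeats iterations while $F\ne\emptyset$. *)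

theory Defs
  imports "HOL-Probability.Probability"
begin

definition nbr :: "('f \<times> 'c) set \<Rightarrow> 'f \<Rightarrow> 'c set" where
  "nbr E i = {j. (i, j) \<in> E}"

definition nbrF :: "'f set \<Rightarrow> ('f \<times> 'c) set \<Rightarrow> 'f \<Rightarrow> 'f set" where
  "nbrF F E i = {i' \<in> F. i' \<noteq> i \<and> (\<exists>j. (i, j) \<in> E \<and> (i', j) \<in> E)}"

text \<open>The set I selected in one iteration for the random values r
  (a facility is selected iff its value strictly exceeds those of all its
  G_F-neighbours; the max over the empty set is -infinity).\<close>
definition selected :: "'f set \<Rightarrow> ('f \<times> 'c) set \<Rightarrow> ('f \<Rightarrow> real) \<Rightarrow> 'f set" where
  "selected F E r = {i \<in> F. \<forall>i' \<in> nbrF F E i. r i' < r i}"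

definition clients_removed :: "'f set \<Rightarrow> 'c set \<Rightarrow> ('f \<times> 'c) set \<Rightarrow> ('f \<Rightarrow> real) \<Rightarrow> 'c set" where
  "clients_removed F C E r = {j \<in> C. \<exists>i \<in> selected F E r. (i, j) \<in> E}"

definition rand_space :: "'f set \<Rightarrow> ('f \<Rightarrow> real) measure" where
  "rand_space F = PiM F (\<lambda>_. uniform_measure lborel {0..1::real})"

end

theory Submission imports Defs begin

abbreviation U :: "real measure" where "U \<equiv> uniform_measure lborel {0..1::real}"

lemma U_prob: "prob_space U"
  by (rule prob_space_uniform_measure) auto

lemma pow_int: "(\<integral>\<^sup>+y. ennreal (y ^ k) * indicator {0..1::real} y \<partial>lborel) = ennreal (1 / (real k + 1))"
proof -
  have "((\<lambda>y::real. y ^ k) has_integral ((\<lambda>x. x^Suc k / Suc k) (1::real) - (\<lambda>x. x^Suc k / Suc k) 0)) {0..1}"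
  proof (rule fundamental_theorem_of_calculus)
    fix x :: real
    have "((\<lambda>x. x^Suc k) has_real_derivative real (Suc k) * x^k) (at x)"
      using DERIV_pow[of "Suc k" x] by simp
    then have "((\<lambda>x. x^Suc k / Suc k) has_real_derivative real (Suc k) * x^k / Suc k) (at x)"
      by (rule DERIV_cdivide)
    then have "((\<lambda>x. x^Suc k / Suc k) has_real_derivative x^k) (at x)"
      by (simp del: of_nat_Suc)
    then have "((\<lambda>x. x^Suc k / Suc k) has_real_derivative x^k) (at x within {0..1})"
      by (rule has_field_derivative_at_within)
    then show "((\<lambda>x. x^Suc k / Suc k) has_vector_derivative x^k) (at x within {0..1})"
      by (simp add: has_real_derivative_iff_has_vector_derivative)
  qed simp
  then have "((\<lambda>y::real. y ^ k) has_integral (1 / (real k + 1))) {0..1}" by (simp add: add.commute)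
  then show ?thesis by (rule nn_integral_has_integral_lebesgue'[rotated]) auto
qed

lemma emU: assumes "0 \<le> y" "y \<le> 1" shows "emeasure U {..<y} = ennreal y"
proof -
  have "{0..1} \<inter> {..<y} = {0..<y}" using assms by auto
  then show ?thesis using assms by (simp add: divide_ennreal_def)
qed

lemma outer: "(\<integral>\<^sup>+y. emeasure U {..<y} ^ k \<partial>U) = ennreal (1 / (real k + 1))"
proof -
  have "(\<integral>\<^sup>+y. emeasure U {..<y} ^ k \<partial>U) = (\<integral>\<^sup>+y. ennreal (y ^ k) \<partial>U)"
    apply (rule nn_integral_cong_AE)
    apply (rule AE_uniform_measureI)
     apply simp
    apply (rule AE_I2)
    apply (intro impI)
    apply (subst emU)
    by (auto simp: ennreal_power)
  also have "\<dots> = (\<integral>\<^sup>+y. ennreal (y ^ k) * indicator {0..1::real} y \<partial>lborel) / emeasure lborel {0..1::real}"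
    by (rule nn_integral_uniform_measure) auto
  also have "\<dots> = ennreal (1 / (real k + 1))" using pow_int by (simp add: divide_ennreal_def)
  finally show ?thesis .
qed

lemma prod_ind:
  assumes "finite G" "S \<subseteq> G"
  shows "(\<Prod>i'\<in>G. if i'\<in>S then indicator {..<y} (x i') else (1::ennreal)) = ennreal (if \<forall>i'\<in>S. x i' < (y::real) then 1 else 0)"
proof (cases "\<forall>i'\<in>S. x i' < y")
  case True
  then have "(\<Prod>i'\<in>G. if i'\<in>S then indicator {..<y} (x i') else (1::ennreal)) = (\<Prod>i'\<in>G. 1)"
    by (intro prod.cong) auto
  then show ?thesis using True by simp
next
  case False
  then obtain j where j: "j \<in> S" "\<not> x j < y" by auto
  have z: "(\<Prod>i'\<in>G. if i'\<in>S then indicator {..<y} (x i') else (1::ennreal)) = 0"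
    using j assms by (intro prod_zero) (auto intro!: bexI[of _ j])
  have e: "ennreal (if \<forall>i'\<in>S. x i' < (y::real) then 1 else 0) = 0" using False by simp
  show ?thesis by (simp only: z e)
qed

lemma sel_nn:
  fixes F :: "'f set"
  assumes "finite F" "i \<in> F" "S \<subseteq> F - {i}"
  shows "(\<integral>\<^sup>+r. ennreal (if \<forall>i'\<in>S. r i' < r i then 1 else 0) \<partial>rand_space F) = ennreal (1 / (real (card S) + 1))"
proof -
  interpret P: product_prob_space "\<lambda>_. U" by (rule product_prob_spaceI) (rule U_prob)
  define G where "G = F - {i}"
  have Fi: "F = insert i G" "i \<notin> G" "S \<subseteq> G" "finite G" using assms unfolding G_def by auto
  have finS: "finite S" using Fi finite_subset by blast
  let ?f = "\<lambda>r. ennreal (if \<forall>i'\<in>S. r i' < r i then 1 else 0)"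
  have meas: "?f \<in> borel_measurable (PiM (insert i G) (\<lambda>_. U))"
  proof -
    have "Measurable.pred (PiM (insert i G) (\<lambda>_. U)) (\<lambda>r. \<forall>i'\<in>S. r i' < r i)"
    proof (intro pred_intros_finite[OF finS])
      fix i' assume "i' \<in> S"
      then have "i' \<in> insert i G" using Fi by auto
      then show "Measurable.pred (PiM (insert i G) (\<lambda>_. U)) (\<lambda>r. r i' < r i)"
        by measurable
    qed
    then show ?thesis by measurable
  qed
  have inner: "(\<integral>\<^sup>+x. ?f (x(i:=y)) \<partial>PiM G (\<lambda>_. U)) = emeasure U {..<y} ^ card S" for y
  proof -
    have "(\<integral>\<^sup>+x. ?f (x(i:=y)) \<partial>PiM G (\<lambda>_. U))
        = (\<integral>\<^sup>+x. (\<Prod>i'\<in>G. if i'\<in>S then indicator {..<y} (x i') else (1::ennreal)) \<partial>PiM G (\<lambda>_. U))"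
    proof (rule nn_integral_cong)
      fix x
      have "?f (x(i:=y)) = ennreal (if \<forall>i'\<in>S. x i' < y then 1 else 0)"
        using Fi by (auto intro!: arg_cong[where f=ennreal])
      then show "?f (x(i:=y)) = (\<Prod>i'\<in>G. if i'\<in>S then indicator {..<y} (x i') else (1::ennreal))"
        using prod_ind[OF Fi(4) Fi(3)] by simp
    qed
    also have "\<dots> = (\<Prod>i'\<in>G. integral\<^sup>N U (\<lambda>t. if i'\<in>S then indicator {..<y} t else (1::ennreal)))"
      by (rule P.product_nn_integral_prod) (auto simp: Fi)
    also have "\<dots> = (\<Prod>i'\<in>G. if i'\<in>S then emeasure U {..<y} else 1)"
    proof (rule prod.cong)
      fix i' assume "i' \<in> G"
      show "integral\<^sup>N U (\<lambda>t. if i'\<in>S then indicator {..<y} t else (1::ennreal)) = (if i'\<in>S then emeasure U {..<y} else 1)"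
      proof (cases "i' \<in> S")
        case True
        then show ?thesis by (simp del: emeasure_uniform_measure)
      next
        case False
        then show ?thesis using prob_space.emeasure_space_1[OF U_prob] by simp
      qed
    qed simp
    also have "\<dots> = emeasure U {..<y} ^ card S"
      using Fi by (simp add: prod.If_cases Int_absorb1 Int_commute)
    finally show ?thesis .
  qed
  have "(\<integral>\<^sup>+r. ?f r \<partial>rand_space F) = (\<integral>\<^sup>+y. (\<integral>\<^sup>+x. ?f (x(i:=y)) \<partial>PiM G (\<lambda>_. U)) \<partial>U)"
    unfolding rand_space_def Fi(1)
    by (rule P.product_nn_integral_insert_rev[OF Fi(4) Fi(2) meas])
  also have "\<dots> = (\<integral>\<^sup>+y. emeasure U {..<y} ^ card S \<partial>U)" by (simp only: inner)
  also have "\<dots> = ennreal (1 / (real (card S) + 1))" by (rule outer)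
  finally show ?thesis .
qed

lemma sel_meas:
  fixes F :: "'f set"
  assumes "finite F" "i \<in> F" "S \<subseteq> F"
  shows "(\<lambda>r. if \<forall>i'\<in>S. r i' < r i then 1 else (0::real)) \<in> borel_measurable (rand_space F)"
proof -
  have finS: "finite S" using assms finite_subset by blast
  have "Measurable.pred (PiM F (\<lambda>_. U)) (\<lambda>r. \<forall>i'\<in>S. r i' < r i)"
  proof (intro pred_intros_finite[OF finS])
    fix i' assume "i' \<in> S"
    then have "i' \<in> F" using assms by auto
    then show "Measurable.pred (PiM F (\<lambda>_. U)) (\<lambda>r. r i' < r i)"
      using assms(2) by measurable
  qed
  then show ?thesis unfolding rand_space_def by measurable
qed

lemma sel_int:
  fixes F :: "'f set"
  assumes "finite F" "i \<in> F" "S \<subseteq> F - {i}"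
  shows "integrable (rand_space F) (\<lambda>r. if \<forall>i'\<in>S. r i' < r i then 1 else (0::real))"
    and "(\<integral>r. (if \<forall>i'\<in>S. r i' < r i then 1 else (0::real)) \<partial>rand_space F) = 1 / (real (card S) + 1)"
proof -
  have m: "(\<lambda>r. if \<forall>i'\<in>S. r i' < r i then 1 else (0::real)) \<in> borel_measurable (rand_space F)"
    using sel_meas[of F i S] assms by auto
  have nn: "(\<integral>\<^sup>+r. ennreal (if \<forall>i'\<in>S. r i' < r i then 1 else (0::real)) \<partial>rand_space F) = ennreal (1 / (real (card S) + 1))"
    by (rule sel_nn[OF assms])
  show "integrable (rand_space F) (\<lambda>r. if \<forall>i'\<in>S. r i' < r i then 1 else (0::real))"
    by (rule integrableI_nonneg[OF m]) (auto simp: nn)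
  show "(\<integral>r. (if \<forall>i'\<in>S. r i' < r i then 1 else (0::real)) \<partial>rand_space F) = 1 / (real (card S) + 1)"
    by (subst integral_eq_nn_integral[OF m]) (auto simp: nn)
qed

theorem lemma5:
  fixes F :: "'f set" and C :: "'c set" and E :: "('f \<times> 'c) set"
  assumes "finite F" and "finite C"
    and "E \<subseteq> F \<times> C"
    and "F \<noteq> {}"
    and "\<forall>i\<in>F. \<exists>j. (i, j) \<in> E"
    and "\<forall>j\<in>C. \<exists>i. (i, j) \<in> E"
    and "real (card E) \<ge> real (card F + card C) * sqrt (real (card F + card C))"
  shows "(\<integral>r. real (card (clients_removed F C E r)) \<partial>rand_space F) \<ge> sqrt (real (card C))"
proof -
  define h where "h i (r::'f \<Rightarrow> real) = (if \<forall>i'\<in>nbrF F E i. r i' < r i then 1 else (0::real))" for i r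
  have NF: "nbrF F E i \<subseteq> F - {i}" for i unfolding nbrF_def by auto
  have finN: "finite (nbr E i)" for i
  proof (rule finite_subset[OF _ assms(2)])
    show "nbr E i \<subseteq> C" using assms(3) unfolding nbr_def by auto
  qed
  have pw: "real (card (clients_removed F C E r)) = (\<Sum>i\<in>F. real (card (nbr E i)) * h i r)" for r
  proof -
    have eq: "clients_removed F C E r = (\<Union>i\<in>selected F E r. nbr E i)"
      using assms(3) unfolding clients_removed_def nbr_def selected_def by auto
    have sF: "selected F E r \<subseteq> F" unfolding selected_def by auto
    have disj: "\<forall>i\<in>selected F E r. \<forall>i'\<in>selected F E r. i \<noteq> i' \<longrightarrow> nbr E i \<inter> nbr E i' = {}"
    proof (intro ballI impI)
      fix i i' assume i: "i \<in> selected F E r" and i': "i' \<in> selected F E r" and ne: "i \<noteq> i'"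
      show "nbr E i \<inter> nbr E i' = {}"
      proof (rule ccontr)
        assume "nbr E i \<inter> nbr E i' \<noteq> {}"
        then obtain j where "(i, j) \<in> E" "(i', j) \<in> E" unfolding nbr_def by auto
        then have "i' \<in> nbrF F E i" "i \<in> nbrF F E i'" using ne i i' unfolding nbrF_def selected_def by auto
        then have "r i' < r i" "r i < r i'" using i i' unfolding selected_def by auto
        then show False by simp
      qed
    qed
    have "card (clients_removed F C E r) = (\<Sum>i\<in>selected F E r. card (nbr E i))"
      unfolding eq
      by (rule card_UN_disjoint) (use finite_subset[OF sF assms(1)] finN disj in auto)
    also have "\<dots> = (\<Sum>i\<in>F. if \<forall>i'\<in>nbrF F E i. r i' < r i then card (nbr E i) else 0)"
      unfolding selected_def by (rule sum.inter_filter[OF assms(1)])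
    finally show ?thesis unfolding h_def by (simp add: if_distrib cong: if_cong)
  qed
  have int: "integrable (rand_space F) (h i)" "(\<integral>r. h i r \<partial>rand_space F) = 1 / (real (card (nbrF F E i)) + 1)"
    if "i \<in> F" for i
    using sel_int[OF assms(1) that NF[of i]] unfolding h_def by auto
  have "(\<integral>r. real (card (clients_removed F C E r)) \<partial>rand_space F) = (\<integral>r. (\<Sum>i\<in>F. real (card (nbr E i)) * h i r) \<partial>rand_space F)"
    by (simp only: pw)
  also have "\<dots> = (\<Sum>i\<in>F. (\<integral>r. real (card (nbr E i)) * h i r \<partial>rand_space F))"
    by (rule Bochner_Integration.integral_sum[where f="\<lambda>i (r::'f \<Rightarrow> real). real (card (nbr E i)) * h i r"]) (use int in auto)
  also have "\<dots> = (\<Sum>i\<in>F. real (card (nbr E i)) / (real (card (nbrF F E i)) + 1))"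
    by (rule sum.cong) (use int in auto)
  finally have I: "(\<integral>r. real (card (clients_removed F C E r)) \<partial>rand_space F) = (\<Sum>i\<in>F. real (card (nbr E i)) / (real (card (nbrF F E i)) + 1))" .
  have cF: "card F \<ge> 1" using assms(1,4) by (simp add: Suc_le_eq card_gt_0_iff)
  have "(\<Sum>i\<in>F. real (card (nbr E i)) / real (card F)) \<le> (\<Sum>i\<in>F. real (card (nbr E i)) / (real (card (nbrF F E i)) + 1))"
  proof (rule sum_mono)
    fix i assume "i \<in> F"
    have "card (nbrF F E i) \<le> card (F - {i})" by (rule card_mono) (use assms(1) NF in auto)
    also have "\<dots> = card F - 1" using \<open>i \<in> F\<close> assms(1) by simp
    finally have "real (card (nbrF F E i)) + 1 \<le> real (card F)" using cF by linarith
    then show "real (card (nbr E i)) / real (card F) \<le> real (card (nbr E i)) / (real (card (nbrF F E i)) + 1)"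
      by (intro divide_left_mono) auto
  qed
  moreover have "(\<Sum>i\<in>F. real (card (nbr E i)) / real (card F)) = real (card E) / real (card F)"
  proof -
    have "E = Sigma F (nbr E)" using assms(3) unfolding nbr_def by auto
    moreover have "card (Sigma F (nbr E)) = (\<Sum>i\<in>F. card (nbr E i))"
      using card_SigmaI[OF assms(1), of "nbr E"] finN by blast
    ultimately have "card E = (\<Sum>i\<in>F. card (nbr E i))" by simp
    then show ?thesis by (simp add: sum_divide_distrib)
  qed
  moreover have "sqrt (real (card C)) \<le> real (card E) / real (card F)"
  proof -
    have "real (card F) * sqrt (real (card C)) \<le> real (card F + card C) * sqrt (real (card F + card C))"
      by (intro mult_mono) auto
    then have "real (card F) * sqrt (real (card C)) \<le> real (card E)" using assms(7) by linarith
    then show ?thesis using cF by (simp add: field_simps)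
  qed
  ultimately show ?thesis using I by linarith
qed

end
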